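(* Let $G=(V,E)$ be a connected undirected unweighted graph on $N$ vertices, and let $S_0\subseteq V$ be the initial set of mutants. Then under the mixed $\delta$-updating process with $\delta=1/2$ and neutral fitness $r=1$, the fixation probability satisfies $\mathsf{fp}_{r=1}^{\delta=1/2}(G,S_0)=|S_0|/N$.
   Context: Mixed $\delta$-updating on a connected undirected unweighted graph $G=(V,E)$ with $N$ vertices ($\deg(u)$ is the number of neighbors of $u$): each vertex holds a mutant (fitness $r>0$) or a wild-type (fitness $1$); $S\subseteq V$ denotes the current set of mutants and $f_S(u)\in\{1,r\}$ the fitness at $u$. At each discrete time step, independently, with probability $\delta$ a death-Birth (dB) step occurs: a vertex $v$ is chosen uniformly at random to die, then a neighbor $u$ of $v$ is chosen with probability proportional to $f_S(u)$, and $u$ copies its type onto $v$. With probability $1-\delta$ a Birth-death (Bd) step occurs: a vertex $u$ is chosen with probability proportional to $f_S(u)$ among all of $V$, then a neighbor $v$ of $u$ is chosen uniformly at random, and $u$ copies its type onto $v$. Fixation means all vertices become mutant. $\mathsf{fp}_r^\delta(G,S_0)$ is the probability of fixation when the initial mutant set is $S_0$. *)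

theory Defs
  imports "HOL-Probability.Probability"
begin

definition connected_graph :: "'a set \<Rightarrow> ('a \<Rightarrow> 'a \<Rightarrow> bool) \<Rightarrow> bool" where
  "connected_graph V E \<longleftrightarrow>
     finite V \<and> V \<noteq> {} \<and>
     (\<forall>u v. E u v \<longrightarrow> u \<in> V \<and> v \<in> V) \<and>
     (\<forall>u v. E u v \<longrightarrow> E v u) \<and>
     (\<forall>u. \<not> E u u) \<and>
     (\<forall>u\<in>V. \<forall>v\<in>V. E\<^sup>*\<^sup>* u v)"

definition nbrs :: "('a \<Rightarrow> 'a \<Rightarrow> bool) \<Rightarrow> 'a \<Rightarrow> 'a set" where
  "nbrs E u = {v. E u v}"

definition fit :: "real \<Rightarrow> 'a set \<Rightarrow> 'a \<Rightarrow> real" where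
  "fit r S u = (if u \<in> S then r else 1)"

definition weighted_pmf :: "'a set \<Rightarrow> ('a \<Rightarrow> real) \<Rightarrow> 'a pmf" where
  "weighted_pmf A w = embed_pmf (\<lambda>x. if x \<in> A then w x / sum w A else 0)"

definition copy_type :: "'a set \<Rightarrow> 'a \<Rightarrow> 'a \<Rightarrow> 'a set" where
  "copy_type S u v = (if u \<in> S then insert v S else S - {v})"

definition dB_step :: "'a set \<Rightarrow> ('a \<Rightarrow> 'a \<Rightarrow> bool) \<Rightarrow> real \<Rightarrow> 'a set \<Rightarrow> 'a set pmf" where
  "dB_step V E r S =
     pmf_of_set V \<bind> (\<lambda>v.
       if nbrs E v = {} then return_pmf S
       else weighted_pmf (nbrs E v) (fit r S) \<bind> (\<lambda>u. return_pmf (copy_type S u v)))"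

definition Bd_step :: "'a set \<Rightarrow> ('a \<Rightarrow> 'a \<Rightarrow> bool) \<Rightarrow> real \<Rightarrow> 'a set \<Rightarrow> 'a set pmf" where
  "Bd_step V E r S =
     weighted_pmf V (fit r S) \<bind> (\<lambda>u.
       if nbrs E u = {} then return_pmf S
       else pmf_of_set (nbrs E u) \<bind> (\<lambda>v. return_pmf (copy_type S u v)))"

definition mixed_step :: "'a set \<Rightarrow> ('a \<Rightarrow> 'a \<Rightarrow> bool) \<Rightarrow> real \<Rightarrow> real \<Rightarrow> 'a set \<Rightarrow> 'a set pmf" where
  "mixed_step V E r \<delta> S =
     bernoulli_pmf \<delta> \<bind> (\<lambda>b. if b then dB_step V E r S else Bd_step V E r S)"

primrec state_dist :: "'a set \<Rightarrow> ('a \<Rightarrow> 'a \<Rightarrow> bool) \<Rightarrow> real \<Rightarrow> real \<Rightarrow> 'a set \<Rightarrow> nat \<Rightarrow> 'a set pmf" where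
  "state_dist V E r \<delta> S0 0 = return_pmf S0"
| "state_dist V E r \<delta> S0 (Suc t) = state_dist V E r \<delta> S0 t \<bind> mixed_step V E r \<delta>"

text \<open>Probability that fixation (all vertices mutant; an absorbing state) has
  occurred by time t. This is nondecreasing in t and its limit is the fixation
  probability fp.\<close>
definition fix_by :: "'a set \<Rightarrow> ('a \<Rightarrow> 'a \<Rightarrow> bool) \<Rightarrow> real \<Rightarrow> real \<Rightarrow> 'a set \<Rightarrow> nat \<Rightarrow> real" where
  "fix_by V E r \<delta> S0 t = measure_pmf.prob (state_dist V E r \<delta> S0 t) {V}"

definition fixation_prob :: "'a set \<Rightarrow> ('a \<Rightarrow> 'a \<Rightarrow> bool) \<Rightarrow> real \<Rightarrow> real \<Rightarrow> 'a set \<Rightarrow> real" where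
  "fixation_prob V E r \<delta> S0 = lim (fix_by V E r \<delta> S0)"

end

theory Submission
  imports Defs
begin


lemma exp_bind:
  fixes f :: "'b \<Rightarrow> real"
  assumes fM: "finite (set_pmf M)" and fN: "\<And>x. x \<in> set_pmf M \<Longrightarrow> finite (set_pmf (N x))"
  shows "measure_pmf.expectation (bind_pmf M N) f
       = measure_pmf.expectation M (\<lambda>x. measure_pmf.expectation (N x) f)"
proof -
  define A where "A = set_pmf M"
  define B where "B = (\<Union>x\<in>A. set_pmf (N x))"
  have fA: "finite A" using fM A_def by simp
  have fB: "finite B" using fN fA by (auto simp: B_def A_def)
  have "measure_pmf.expectation (bind_pmf M N) f = (\<Sum>b\<in>B. f b * pmf (bind_pmf M N) b)"
    by (rule integral_measure_pmf_real) (use fB in \<open>auto simp: B_def A_def set_bind_pmf\<close>)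
  also have "\<dots> = (\<Sum>b\<in>B. f b * (\<Sum>a\<in>A. pmf (N a) b * pmf M a))"
  proof (rule sum.cong[OF refl])
    fix b assume "b \<in> B"
    have "pmf (bind_pmf M N) b = (\<Sum>a\<in>A. pmf (N a) b * pmf M a)"
      unfolding pmf_bind by (rule integral_measure_pmf_real) (use fA in \<open>auto simp: A_def\<close>)
    then show "f b * pmf (bind_pmf M N) b = f b * (\<Sum>a\<in>A. pmf (N a) b * pmf M a)" by simp
  qed
  also have "\<dots> = (\<Sum>a\<in>A. (\<Sum>b\<in>B. f b * pmf (N a) b) * pmf M a)"
    unfolding sum_distrib_left sum_distrib_right by (subst sum.swap) (simp add: mult_ac)
  also have "\<dots> = (\<Sum>a\<in>A. measure_pmf.expectation (N a) f * pmf M a)"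
  proof (rule sum.cong[OF refl])
    fix a assume a: "a \<in> A"
    have "measure_pmf.expectation (N a) f = (\<Sum>b\<in>B. f b * pmf (N a) b)"
      by (rule integral_measure_pmf_real) (use a fB in \<open>auto simp: B_def\<close>)
    then show "(\<Sum>b\<in>B. f b * pmf (N a) b) * pmf M a = measure_pmf.expectation (N a) f * pmf M a" by simp
  qed
  also have "\<dots> = measure_pmf.expectation M (\<lambda>x. measure_pmf.expectation (N x) f)"
    by (rule integral_measure_pmf_real[symmetric]) (use fA in \<open>auto simp: A_def\<close>)
  finally show ?thesis .
qed

lemma weighted_one:
  assumes "finite A" "A \<noteq> {}"
  shows "weighted_pmf A (fit 1 S) = pmf_of_set A"
proof -
  have "(\<lambda>x. if x \<in> A then fit 1 S x / sum (fit 1 S) A else 0) = pmf (pmf_of_set A)"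
    using assms by (intro ext) (auto simp: fit_def indicator_def)
  then show ?thesis unfolding weighted_pmf_def
    using type_definition.Rep_inverse[OF td_pmf_embed_pmf] by metis
qed

lemma cg_facts:
  assumes "connected_graph V E"
  shows "finite V" "V \<noteq> {}" "\<And>x. nbrs E x \<subseteq> V" "\<And>x. finite (nbrs E x)"
    "\<And>u v. E u v \<Longrightarrow> E v u" "\<And>u v. E u v \<Longrightarrow> u \<in> V"
proof -
  have sub: "nbrs E x \<subseteq> V" for x using assms unfolding connected_graph_def nbrs_def by auto
  show "\<And>x. nbrs E x \<subseteq> V" by (rule sub)
  show "finite V" "V \<noteq> {}" "\<And>u v. E u v \<Longrightarrow> E v u" "\<And>u v. E u v \<Longrightarrow> u \<in> V"
    using assms unfolding connected_graph_def by auto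
  then show "\<And>x. finite (nbrs E x)" using sub finite_subset by metis
qed

lemma exp_uniform_map:
  fixes h :: "'b \<Rightarrow> real"
  assumes "finite A" "A \<noteq> {}"
  shows "measure_pmf.expectation (pmf_of_set A \<bind> (\<lambda>u. return_pmf (g u))) h = (\<Sum>u\<in>A. h (g u)) / card A"
  using assms by (subst exp_bind) (auto simp: integral_pmf_of_set)

definition dBf :: "'a set \<Rightarrow> ('a \<Rightarrow> 'a \<Rightarrow> bool) \<Rightarrow> 'a set \<Rightarrow> 'a set pmf" where
  "dBf V E S = pmf_of_set V \<bind> (\<lambda>v. if nbrs E v = {} then return_pmf S
       else pmf_of_set (nbrs E v) \<bind> (\<lambda>u. return_pmf (copy_type S u v)))"

definition Bdf :: "'a set \<Rightarrow> ('a \<Rightarrow> 'a \<Rightarrow> bool) \<Rightarrow> 'a set \<Rightarrow> 'a set pmf" where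
  "Bdf V E S = pmf_of_set V \<bind> (\<lambda>u. if nbrs E u = {} then return_pmf S
       else pmf_of_set (nbrs E u) \<bind> (\<lambda>v. return_pmf (copy_type S u v)))"

lemma mixed_eq:
  assumes "connected_graph V E"
  shows "mixed_step V E 1 \<delta> S = bernoulli_pmf \<delta> \<bind> (\<lambda>b. if b then dBf V E S else Bdf V E S)"
proof -
  note cg = cg_facts[OF assms]
  have "dB_step V E 1 S = dBf V E S"
    unfolding dB_step_def dBf_def
    by (intro bind_pmf_cong refl) (auto simp: weighted_one cg)
  moreover have "Bd_step V E 1 S = Bdf V E S"
    unfolding Bd_step_def Bdf_def
    by (subst weighted_one) (auto simp: cg)
  ultimately show ?thesis unfolding mixed_step_def by (intro bind_pmf_cong refl) auto
qed

lemma copy_sub: "S \<subseteq> V \<Longrightarrow> v \<in> V \<Longrightarrow> copy_type S u v \<subseteq> V"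
  by (auto simp: copy_type_def)

lemma exp_inner:
  fixes h :: "'b \<Rightarrow> real"
  assumes "finite A"
  shows "measure_pmf.expectation (if A = {} then return_pmf S else pmf_of_set A \<bind> (\<lambda>u. return_pmf (g u))) h
     = (if A = {} then h S else (\<Sum>u\<in>A. h (g u)) / card A)"
  using assms by (cases "A = {}") (simp_all add: exp_uniform_map)

lemma set_inner:
  assumes "finite A" "S \<subseteq> V" "\<And>u. u \<in> A \<Longrightarrow> g u \<subseteq> V"
  shows "set_pmf (if A = {} then return_pmf S else pmf_of_set A \<bind> (\<lambda>u. return_pmf (g u))) \<subseteq> Pow V"
  using assms by (cases "A = {}") auto

lemma set_dB_Bd:
  assumes "connected_graph V E" "S \<subseteq> V"
  shows "set_pmf (dBf V E S) \<subseteq> Pow V \<and> set_pmf (Bdf V E S) \<subseteq> Pow V"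
proof -
  note cg = cg_facts[OF assms(1)]
  have nv: "u \<in> nbrs E x \<Longrightarrow> u \<in> V" for u x using cg(3) by blast
  have "set_pmf (dBf V E S) \<subseteq> Pow V"
    unfolding dBf_def set_bind_pmf set_pmf_of_set[OF cg(2,1)]
  proof (rule UN_least)
    fix x assume "x \<in> V"
    then show "set_pmf (if nbrs E x = {} then return_pmf S
       else pmf_of_set (nbrs E x) \<bind> (\<lambda>u. return_pmf (copy_type S u x))) \<subseteq> Pow V"
      using cg(4) assms(2) by (intro set_inner) (auto simp: copy_type_def)
  qed
  moreover have "set_pmf (Bdf V E S) \<subseteq> Pow V"
    unfolding Bdf_def set_bind_pmf set_pmf_of_set[OF cg(2,1)]
  proof (rule UN_least)
    fix x assume "x \<in> V"
    then show "set_pmf (if nbrs E x = {} then return_pmf S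
       else pmf_of_set (nbrs E x) \<bind> (\<lambda>u. return_pmf (copy_type S x u))) \<subseteq> Pow V"
      using cg(4) assms(2) nv by (intro set_inner) (auto simp: copy_type_def)
  qed
  ultimately show ?thesis by blast
qed

lemma set_mixed:
  assumes "connected_graph V E" "S \<subseteq> V"
  shows "set_pmf (mixed_step V E 1 (1/2) S) \<subseteq> Pow V"
  unfolding mixed_eq[OF assms(1)] set_bind_pmf
proof (rule UN_least)
  fix b show "set_pmf (if b then dBf V E S else Bdf V E S) \<subseteq> Pow V"
    using set_dB_Bd[OF assms] by (cases b) auto
qed

lemma half_comb: "(1/2::real) * (a / n) + 1/2 * (b / n) = (a + b) / (2 * n)"
  by (cases "n = 0") (simp_all add: field_simps)

lemma exp_mixed:
  fixes h :: "'a set \<Rightarrow> real"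
  assumes "connected_graph V E" "S \<subseteq> V"
  shows "measure_pmf.expectation (mixed_step V E 1 (1/2) S) h =
    (\<Sum>x\<in>V. (if nbrs E x = {} then 2 * h S
       else (\<Sum>u\<in>nbrs E x. h (copy_type S u x) + h (copy_type S x u)) / card (nbrs E x))) / (2 * real (card V))"
proof -
  note cg = cg_facts[OF assms(1)]
  have dB: "measure_pmf.expectation (dBf V E S) h = (\<Sum>x\<in>V. (if nbrs E x = {} then h S
       else (\<Sum>u\<in>nbrs E x. h (copy_type S u x)) / card (nbrs E x))) / card V"
    unfolding dBf_def using cg
    by (subst exp_bind) (auto simp: integral_pmf_of_set exp_inner)
  have Bd: "measure_pmf.expectation (Bdf V E S) h = (\<Sum>x\<in>V. (if nbrs E x = {} then h S
       else (\<Sum>u\<in>nbrs E x. h (copy_type S x u)) / card (nbrs E x))) / card V"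
    unfolding Bdf_def using cg
    by (subst exp_bind) (auto simp: integral_pmf_of_set exp_inner)
  have fin: "finite (set_pmf (dBf V E S))" "finite (set_pmf (Bdf V E S))"
    using set_dB_Bd[OF assms] cg(1) finite_subset[of _ "Pow V"] by auto
  have "measure_pmf.expectation (mixed_step V E 1 (1/2) S) h
     = (1/2) * measure_pmf.expectation (dBf V E S) h + (1/2) * measure_pmf.expectation (Bdf V E S) h"
    unfolding mixed_eq[OF assms(1)] using fin
    by (subst exp_bind) auto
  also have "\<dots> = ((\<Sum>x\<in>V. (if nbrs E x = {} then h S
       else (\<Sum>u\<in>nbrs E x. h (copy_type S u x)) / card (nbrs E x))) + (\<Sum>x\<in>V. (if nbrs E x = {} then h S
       else (\<Sum>u\<in>nbrs E x. h (copy_type S x u)) / card (nbrs E x)))) / (2 * real (card V))"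
    unfolding dB Bd by (rule half_comb)
  also have "(\<Sum>x\<in>V. (if nbrs E x = {} then h S
       else (\<Sum>u\<in>nbrs E x. h (copy_type S u x)) / card (nbrs E x))) + (\<Sum>x\<in>V. (if nbrs E x = {} then h S
       else (\<Sum>u\<in>nbrs E x. h (copy_type S x u)) / card (nbrs E x)))
    = (\<Sum>x\<in>V. (if nbrs E x = {} then 2 * h S
       else (\<Sum>u\<in>nbrs E x. h (copy_type S u x) + h (copy_type S x u)) / card (nbrs E x)))"
    unfolding sum.distrib[symmetric]
    by (intro sum.cong refl) (simp add: sum.distrib add_divide_distrib)
  finally show ?thesis .
qed



lemma card_copy_cases:
  assumes "finite S"
  shows "real (card (copy_type S u x)) =
     (if u \<in> S then (if x \<in> S then real (card S) else real (card S) + 1) else (if x \<in> S then real (card S) - 1 else real (card S)))"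
proof -
  have "x \<in> S \<Longrightarrow> card S > 0" using assms card_gt_0_iff by blast
  then show ?thesis
    using assms by (auto simp: copy_type_def card_insert_if card_Diff_singleton_if of_nat_diff)
qed

lemma copy_card: "finite S \<Longrightarrow> real (card (copy_type S u x)) + real (card (copy_type S x u)) = 2 * real (card S)"
  by (simp add: card_copy_cases)

lemma copy_sq: "finite S \<Longrightarrow> real (card (copy_type S u x))^2 + real (card (copy_type S x u))^2
   = 2 * real (card S)^2 + (if (u \<in> S) \<noteq> (x \<in> S) then 2 else 0)"
  by (simp add: card_copy_cases power2_eq_square algebra_simps)

lemma boundary:
  assumes "E\<^sup>*\<^sup>* a b" "a \<in> S" "b \<notin> S"
  shows "\<exists>x u. E x u \<and> x \<in> S \<and> u \<notin> S"
  using assms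
proof (induction rule: rtranclp_induct)
  case base then show ?case by simp
next
  case (step y z)
  show ?case
  proof (cases "y \<in> S")
    case True then show ?thesis using step by blast
  next
    case False then show ?thesis using step by blast
  qed
qed

lemma step_card:
  assumes cg0: "connected_graph V E" and SV: "S \<subseteq> V"
  shows "measure_pmf.expectation (mixed_step V E 1 (1/2) S) (\<lambda>T. real (card T)) = real (card S)"
proof -
  note cg = cg_facts[OF cg0]
  have fS: "finite S" using SV cg(1) finite_subset by blast
  have "\<And>x. x \<in> V \<Longrightarrow> (if nbrs E x = {} then 2 * real (card S)
       else (\<Sum>u\<in>nbrs E x. real (card (copy_type S u x)) + real (card (copy_type S x u))) / card (nbrs E x))
     = 2 * real (card S)"
    using cg(4) by (simp add: copy_card[OF fS])
  then have "(\<Sum>x\<in>V. (if nbrs E x = {} then 2 * real (card S)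
       else (\<Sum>u\<in>nbrs E x. real (card (copy_type S u x)) + real (card (copy_type S x u))) / card (nbrs E x)))
     = real (card V) * (2 * real (card S))" by simp
  then show ?thesis unfolding exp_mixed[OF cg0 SV] using cg(1,2) by simp
qed

lemma step_sq:
  assumes cg0: "connected_graph V E" and SV: "S \<subseteq> V"
  shows "measure_pmf.expectation (mixed_step V E 1 (1/2) S) (\<lambda>T. real (card T)^2)
     \<ge> real (card S)^2 + (if S \<noteq> {} \<and> S \<noteq> V then 1 / real (card V)^2 else 0)"
proof -
  note cg = cg_facts[OF cg0]
  have fS: "finite S" using SV cg(1) finite_subset by blast
  define N where "N = real (card V)"
  have Npos: "N > 0" using cg(1,2) N_def by (simp add: card_gt_0_iff)
  define \<beta> where "\<beta> x = (if nbrs E x = {} then 0 else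
      (\<Sum>u\<in>nbrs E x. (if (u \<in> S) \<noteq> (x \<in> S) then 2 else 0)) / real (card (nbrs E x)))" for x
  have \<beta>nn: "\<beta> x \<ge> 0" for x unfolding \<beta>_def by (simp add: sum_nonneg)
  have T: "\<And>x. x \<in> V \<Longrightarrow> (if nbrs E x = {} then 2 * real (card S)^2
       else (\<Sum>u\<in>nbrs E x. real (card (copy_type S u x))^2 + real (card (copy_type S x u))^2) / card (nbrs E x))
     = 2 * real (card S)^2 + \<beta> x"
    using cg(4) by (simp add: copy_sq[OF fS] \<beta>_def sum.distrib add_divide_distrib card_gt_0_iff)
  have e: "measure_pmf.expectation (mixed_step V E 1 (1/2) S) (\<lambda>T. real (card T)^2)
     = real (card S)^2 + (\<Sum>x\<in>V. \<beta> x) / (2 * N)"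
    unfolding exp_mixed[OF cg0 SV] using Npos
    by (simp add: T sum.distrib N_def add_divide_distrib)
  have extra: "(\<Sum>x\<in>V. \<beta> x) / (2 * N) \<ge> (if S \<noteq> {} \<and> S \<noteq> V then 1 / N^2 else 0)"
  proof (cases "S \<noteq> {} \<and> S \<noteq> V")
    case False
    have "0 \<le> (\<Sum>x\<in>V. \<beta> x) / (2 * N)" using \<beta>nn Npos by (simp add: sum_nonneg)
    then show ?thesis using False by presburger
  next
    case True
    then obtain a b where ab: "a \<in> S" "b \<in> V" "b \<notin> S" using SV by blast
    have "E\<^sup>*\<^sup>* a b" using cg0 ab SV unfolding connected_graph_def by blast
    then obtain x u where xu: "E x u" "x \<in> S" "u \<notin> S" using boundary ab by metis
    have xV: "x \<in> V" using xu SV by blast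
    have un: "u \<in> nbrs E x" using xu by (simp add: nbrs_def)
    then have ne: "nbrs E x \<noteq> {}" by blast
    have dpos: "real (card (nbrs E x)) > 0" using ne cg(4) by (simp add: card_gt_0_iff)
    have dle: "real (card (nbrs E x)) \<le> N" unfolding N_def using cg(1,3) card_mono by (simp add: card_mono)
    have "2 \<le> (\<Sum>v\<in>nbrs E x. (if (v \<in> S) \<noteq> (x \<in> S) then 2 else 0::real))"
      using member_le_sum[of u "nbrs E x" "\<lambda>v. (if (v \<in> S) \<noteq> (x \<in> S) then 2 else 0::real)"] un xu cg(4)
      by auto
    then have "2 / real (card (nbrs E x)) \<le> \<beta> x" unfolding \<beta>_def using ne dpos
      by (simp add: divide_right_mono)
    moreover have "2 / N \<le> 2 / real (card (nbrs E x))" using dpos dle by (simp add: frac_le)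
    moreover have "\<beta> x \<le> (\<Sum>x\<in>V. \<beta> x)" using member_le_sum[of x V \<beta>] xV \<beta>nn cg(1) by auto
    ultimately have "2 / N \<le> (\<Sum>x\<in>V. \<beta> x)" by linarith
    then have "(2 / N) / (2 * N) \<le> (\<Sum>x\<in>V. \<beta> x) / (2 * N)" using Npos by (intro divide_right_mono) auto
    moreover have "(2 / N) / (2 * N) = 1 / N^2" using Npos by (simp add: power2_eq_square)
    ultimately show ?thesis using True by simp
  qed
  show ?thesis unfolding e using extra unfolding N_def by linarith
qed



lemma ex_sum:
  fixes f :: "'a set \<Rightarrow> real"
  assumes "set_pmf M \<subseteq> Pow V" "finite V"
  shows "measure_pmf.expectation M f = (\<Sum>S\<in>Pow V. f S * pmf M S)"
  using assms by (intro integral_measure_pmf_real) auto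

lemma set_state:
  assumes "connected_graph V E" "S0 \<subseteq> V"
  shows "set_pmf (state_dist V E 1 (1/2) S0 t) \<subseteq> Pow V"
proof (induction t)
  case 0 then show ?case using assms by simp
next
  case (Suc t)
  show ?case unfolding state_dist.simps set_bind_pmf
  proof (rule UN_least)
    fix S assume "S \<in> set_pmf (state_dist V E 1 (1/2) S0 t)"
    then have "S \<subseteq> V" using Suc by blast
    then show "set_pmf (mixed_step V E 1 (1/2) S) \<subseteq> Pow V" using set_mixed assms(1) by blast
  qed
qed

theorem main_aux:
  fixes V :: "'a set" and E :: "'a \<Rightarrow> 'a \<Rightarrow> bool" and S0 :: "'a set"
  assumes cg0: "connected_graph V E"
    and S0V: "S0 \<subseteq> V"
  shows "fix_by V E 1 (1/2) S0 \<longlonglongrightarrow> real (card S0) / real (card V)"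
proof -
  note cg = cg_facts[OF cg0]
  define D where "D t = state_dist V E 1 (1/2) S0 t" for t
  define W where "W = Pow V"
  define N where "N = real (card V)"
  have Npos: "N > 0" using cg(1,2) N_def by (simp add: card_gt_0_iff)
  have fW: "finite W" using cg(1) W_def by simp
  have setD: "set_pmf (D t) \<subseteq> W" for t unfolding D_def W_def by (rule set_state[OF cg0 S0V])
  have exD: "measure_pmf.expectation (D t) f = (\<Sum>S\<in>W. f S * pmf (D t) S)" for t and f :: "'a set \<Rightarrow> real"
    unfolding W_def by (rule ex_sum[OF setD[unfolded W_def] cg(1)])
  have sum1: "(\<Sum>S\<in>W. pmf (D t) S) = 1" for t by (rule sum_pmf_eq_1[OF fW setD])
  have stepsum: "(\<Sum>S\<in>W. h S * pmf (D (Suc t)) S)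
      = (\<Sum>S\<in>W. measure_pmf.expectation (mixed_step V E 1 (1/2) S) h * pmf (D t) S)"
    for t and h :: "'a set \<Rightarrow> real"
  proof -
    have "(\<Sum>S\<in>W. h S * pmf (D (Suc t)) S) = measure_pmf.expectation (D (Suc t)) h"
      by (rule exD[symmetric])
    also have "\<dots> = measure_pmf.expectation (D t) (\<lambda>S. measure_pmf.expectation (mixed_step V E 1 (1/2) S) h)"
      unfolding D_def state_dist.simps
    proof (rule exp_bind)
      show "finite (set_pmf (state_dist V E 1 (1/2) S0 t))"
        using finite_subset[OF setD fW] unfolding D_def .
      fix S assume "S \<in> set_pmf (state_dist V E 1 (1/2) S0 t)"
      then have "S \<subseteq> V" using setD unfolding D_def W_def by blast
      then show "finite (set_pmf (mixed_step V E 1 (1/2) S))"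
        using finite_subset[OF set_mixed[OF cg0] fW[unfolded W_def]] by blast
    qed
    also have "\<dots> = (\<Sum>S\<in>W. measure_pmf.expectation (mixed_step V E 1 (1/2) S) h * pmf (D t) S)"
      by (rule exD)
    finally show ?thesis .
  qed
  have D0: "(\<Sum>S\<in>W. h S * pmf (D 0) S) = h S0" for h :: "'a set \<Rightarrow> real"
  proof -
    have "measure_pmf.expectation (D 0) h = h S0" unfolding D_def by simp
    then show ?thesis using exD[of 0 h] by simp
  qed
  have mart: "(\<Sum>S\<in>W. real (card S) * pmf (D t) S) = real (card S0)" for t
  proof (induction t)
    case 0 then show ?case by (rule D0)
  next
    case (Suc t)
    have "(\<Sum>S\<in>W. real (card S) * pmf (D (Suc t)) S) = (\<Sum>S\<in>W. real (card S) * pmf (D t) S)"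
      unfolding stepsum using step_card[OF cg0] unfolding W_def by (intro sum.cong refl) auto
    then show ?case using Suc by simp
  qed
  define ind where "ind S = (if S \<noteq> {} \<and> S \<noteq> V then 1 else 0::real)" for S
  define q where "q t = (\<Sum>S\<in>W. ind S * pmf (D t) S)" for t
  define s where "s t = (\<Sum>S\<in>W. real (card S)^2 * pmf (D t) S)" for t
  define c where "c = 1 / N^2"
  have cpos: "c > 0" using Npos c_def by simp
  have qnn: "q t \<ge> 0" for t unfolding q_def ind_def by (intro sum_nonneg) auto
  have sstep: "s (Suc t) \<ge> s t + c * q t" for t
  proof -
    have "s t + c * q t = (\<Sum>S\<in>W. (real (card S)^2 + (if S \<noteq> {} \<and> S \<noteq> V then c else 0)) * pmf (D t) S)"
      unfolding s_def q_def ind_def sum_distrib_left sum.distrib[symmetric]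
      by (intro sum.cong refl) (simp add: algebra_simps)
    also have "\<dots> \<le> (\<Sum>S\<in>W. measure_pmf.expectation (mixed_step V E 1 (1/2) S) (\<lambda>T. real (card T)^2) * pmf (D t) S)"
    proof (rule sum_mono)
      fix S assume "S \<in> W"
      then have "S \<subseteq> V" unfolding W_def by blast
      from step_sq[OF cg0 this] show "(real (card S)^2 + (if S \<noteq> {} \<and> S \<noteq> V then c else 0)) * pmf (D t) S
         \<le> measure_pmf.expectation (mixed_step V E 1 (1/2) S) (\<lambda>T. real (card T)^2) * pmf (D t) S"
        unfolding c_def N_def by (intro mult_right_mono) auto
    qed
    also have "\<dots> = s (Suc t)" unfolding s_def by (rule stepsum[symmetric])
    finally show ?thesis .
  qed
  have sbound: "s t \<le> N^2" for t
  proof -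
    have "s t \<le> (\<Sum>S\<in>W. N^2 * pmf (D t) S)" unfolding s_def
    proof (rule sum_mono)
      fix S assume "S \<in> W"
      then have "card S \<le> card V" unfolding W_def using cg(1) card_mono by blast
      then have "real (card S)^2 \<le> N^2" unfolding N_def by (simp add: power_mono)
      then show "real (card S)^2 * pmf (D t) S \<le> N^2 * pmf (D t) S" by (intro mult_right_mono) auto
    qed
    also have "\<dots> = N^2" using sum1 by (simp add: sum_distrib_left[symmetric])
    finally show ?thesis .
  qed
  have snn: "s t \<ge> 0" for t unfolding s_def by (intro sum_nonneg) auto
  have sacc: "s t \<ge> s 0 + c * (\<Sum>i<t. q i)" for t
  proof (induction t)
    case 0 then show ?case by simp
  next
    case (Suc t) then show ?case using sstep[of t] by (simp add: algebra_simps)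
  qed
  have qpart: "(\<Sum>i<t. q i) \<le> N^2 / c" for t
  proof -
    have "c * (\<Sum>i<t. q i) \<le> N^2" using sacc[of t] sbound[of t] snn[of 0] by linarith
    then show ?thesis using cpos by (simp add: field_simps)
  qed
  have "summable q" by (rule summableI_nonneg_bounded[OF qnn qpart])
  then have q0: "q \<longlonglongrightarrow> 0" by (rule summable_LIMSEQ_zero)
  define r where "r t = (\<Sum>S\<in>W. real (card S) * ind S * pmf (D t) S)" for t
  have fixeq: "fix_by V E 1 (1/2) S0 t = pmf (D t) V" for t
    unfolding fix_by_def D_def by (simp add: measure_pmf_single)
  have decomp: "real (card S0) = N * pmf (D t) V + r t" for t
  proof -
    have "real (card S0) = (\<Sum>S\<in>W. real (card S) * pmf (D t) S)" using mart by simp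
    also have "\<dots> = (\<Sum>S\<in>W. (if S = V then N * pmf (D t) S else 0) + real (card S) * ind S * pmf (D t) S)"
    proof (intro sum.cong refl)
      fix S assume "S \<in> W"
      then show "real (card S) * pmf (D t) S = (if S = V then N * pmf (D t) S else 0) + real (card S) * ind S * pmf (D t) S"
        unfolding ind_def N_def using cg(2) by auto
    qed
    also have "\<dots> = N * pmf (D t) V + r t"
      unfolding sum.distrib r_def using fW by (simp add: W_def)
    finally show ?thesis .
  qed
  have rnn: "r t \<ge> 0" for t unfolding r_def ind_def by (intro sum_nonneg) auto
  have rle: "r t \<le> N * q t" for t
  proof -
    have "r t \<le> (\<Sum>S\<in>W. N * (ind S * pmf (D t) S))" unfolding r_def
    proof (rule sum_mono)
      fix S assume "S \<in> W"
      then have "card S \<le> card V" unfolding W_def using cg(1) card_mono by blast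
      then have "real (card S) \<le> N" unfolding N_def by simp
      moreover have "ind S * pmf (D t) S \<ge> 0" unfolding ind_def by auto
      ultimately show "real (card S) * ind S * pmf (D t) S \<le> N * (ind S * pmf (D t) S)"
        by (simp add: mult.assoc mult_right_mono)
    qed
    also have "\<dots> = N * q t" unfolding q_def by (simp add: sum_distrib_left)
    finally show ?thesis .
  qed
  have "(\<lambda>t. N * q t) \<longlonglongrightarrow> N * 0" by (intro tendsto_mult tendsto_const q0)
  then have "(\<lambda>t. N * q t) \<longlonglongrightarrow> 0" by simp
  then have r0: "r \<longlonglongrightarrow> 0"
    by (intro tendsto_sandwich[of "\<lambda>_. 0" r sequentially "\<lambda>t. N * q t" 0]) (auto intro: rnn rle always_eventually)
  have "(\<lambda>t. (real (card S0) - r t) / N) \<longlonglongrightarrow> (real (card S0) - 0) / N"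
    by (intro tendsto_intros r0) (use Npos in auto)
  moreover have "(real (card S0) - r t) / N = fix_by V E 1 (1/2) S0 t" for t
    using decomp[of t] Npos fixeq[of t] by (simp add: field_simps)
  ultimately show ?thesis unfolding N_def by simp
qed


theorem mainTheorem1:
  fixes V :: "'a set" and E :: "'a \<Rightarrow> 'a \<Rightarrow> bool" and S0 :: "'a set"
  assumes "connected_graph V E"
    and "S0 \<subseteq> V"
  shows "fix_by V E 1 (1/2) S0 \<longlonglongrightarrow> real (card S0) / real (card V)
         \<and> fixation_prob V E 1 (1/2) S0 = real (card S0) / real (card V)"
proof -
  have l: "fix_by V E 1 (1/2) S0 \<longlonglongrightarrow> real (card S0) / real (card V)"
    by (rule main_aux[OF assms])
  then have "fixation_prob V E 1 (1/2) S0 = real (card S0) / real (card V)"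
    unfolding fixation_prob_def by (rule limI)
  with l show ?thesis by blast
qed

end
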